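(* Let $H(c)$ and $p(c)$ (for $c>0$) be the limits $H(c)=\lim_{N\to\infty}N^{-1}H(\mathbb{G}(N,\lfloor cN\rfloor))$ (in probability) and $p(c)=\lim_{N\to\infty}N^{-1}\log p(N,\lfloor cN\rfloor)$. For each of the Coloring, K-SAT and NAE-K-SAT models there exists a critical value $c^*_H$ such that $H(c)=c$ for $c<c^*_H$ and $H(c)<c$ for $c>c^*_H$. Similarly, there exists $c^*_p$ such that $p(c)=0$ for $c<c^*_p$ and $p(c)<0$ for $c>c^*_p$.
   Context: $[N]=\{1,\dots,N\}$; $\chi=\{0,\dots,q-1\}$. $\mathbb{G}(N,M)$ is the random hypergraph on $[N]$ with $M$ directed $K$-hyperedges chosen independently and uniformly at random from $[N]^K$. For a hypergraph $G=([N],E)$ with edge potentials $H_e$, $H(x)=\sum_{e\in E}H_e(x_e)$ for $x\in\chi^N$ (node potentials are zero in these models) and $H(G)=\max_x H(x)$. Models: $q$-Coloring ($K=2$, $H_e(x,y)=1$ if $x\ne y$, $0$ if $x=y$); K-SAT ($q=2$; for each hyperedge independently $a_e$ uniform in $\{0,1\}^K$, $H_e(a_e)=0$, $H_e=1$ otherwise); NAE-K-SAT ($q=2$; $H_e(a_e)=H_e(\mathbf 1-a_e)=0$, $H_e=1$ otherwise). $p(N,M)=\mathbb{P}(H(\mathbb{G}(N,M))=M)$. The limits $H(c)$ and $p(c)$ exist for every $c>0$, and $H$ is Lipschitz continuous with constant $1$. *)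

theory Defs
  imports "HOL-Analysis.Analysis"
begin

text \<open>
A (labelled) hyperedge is a pair (v, a): v is the ordered K-tuple of vertices
(vertices are 0,...,N-1, i.e. [N] shifted by one), a is the random label of the
edge potential (for K-SAT / NAE-K-SAT the distinguished vector a_e in {0,1}^K;
for Coloring the label is trivial, the single value []).
All edge potentials take values in {0,1}; sat a xs says H_e(xs) = 1.
\<close>

type_synonym hyperedge = "nat list \<times> nat list"

text \<open>The sample space of G(N,M) together with the random potentials:
M hyperedges, each a uniform element of [N]^K times a uniform label in L.
Independence + uniformity = uniform distribution on this finite set.\<close>
definition instances :: "nat \<Rightarrow> nat list set \<Rightarrow> nat \<Rightarrow> nat \<Rightarrow> hyperedge list set" where
  "instances K L N M = {G. length G = M \<and>
      (\<forall>(v, a) \<in> set G. length v = K \<and> set v \<subseteq> {0..<N} \<and> a \<in> L)}"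

definition Hval :: "(nat list \<Rightarrow> nat list \<Rightarrow> bool) \<Rightarrow> hyperedge list \<Rightarrow> (nat \<Rightarrow> nat) \<Rightarrow> nat" where
  "Hval sat G x = length (filter (\<lambda>(v, a). sat a (map x v)) G)"

definition energy :: "nat \<Rightarrow> (nat list \<Rightarrow> nat list \<Rightarrow> bool) \<Rightarrow> nat \<Rightarrow> hyperedge list \<Rightarrow> nat" where
  "energy q sat N G = Max (Hval sat G ` (Pi\<^sub>E {0..<N} (\<lambda>_. {0..<q})))"

definition prob_ev :: "nat \<Rightarrow> nat list set \<Rightarrow> nat \<Rightarrow> nat \<Rightarrow> (hyperedge list \<Rightarrow> bool) \<Rightarrow> real" where
  "prob_ev K L N M P = real (card {G \<in> instances K L N M. P G}) / real (card (instances K L N M))"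

definition pNM :: "nat \<Rightarrow> nat \<Rightarrow> nat list set \<Rightarrow> (nat list \<Rightarrow> nat list \<Rightarrow> bool) \<Rightarrow> nat \<Rightarrow> nat \<Rightarrow> real" where
  "pNM K q L sat N M = prob_ev K L N M (\<lambda>G. energy q sat N G = M)"

definition is_H_limit :: "nat \<Rightarrow> nat \<Rightarrow> nat list set \<Rightarrow> (nat list \<Rightarrow> nat list \<Rightarrow> bool) \<Rightarrow> (real \<Rightarrow> real) \<Rightarrow> bool" where
  "is_H_limit K q L sat h \<longleftrightarrow> (\<forall>c>0. \<forall>\<epsilon>>0.
      (\<lambda>N. prob_ev K L N (nat \<lfloor>c * real N\<rfloor>)
              (\<lambda>G. \<bar>real (energy q sat N G) / real N - h c\<bar> > \<epsilon>)) \<longlonglongrightarrow> 0)"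

definition is_p_limit :: "nat \<Rightarrow> nat \<Rightarrow> nat list set \<Rightarrow> (nat list \<Rightarrow> nat list \<Rightarrow> bool) \<Rightarrow> (real \<Rightarrow> real) \<Rightarrow> bool" where
  "is_p_limit K q L sat pf \<longleftrightarrow> (\<forall>c>0.
      (\<lambda>N. ln (pNM K q L sat N (nat \<lfloor>c * real N\<rfloor>)) / real N) \<longlonglongrightarrow> pf c)"

definition coloring_labels :: "nat list set" where "coloring_labels = {[]}"
definition coloring_sat :: "nat list \<Rightarrow> nat list \<Rightarrow> bool" where
  "coloring_sat a xs \<longleftrightarrow> xs ! 0 \<noteq> xs ! 1"

definition bool_vectors :: "nat \<Rightarrow> nat list set" where
  "bool_vectors K = {a. length a = K \<and> set a \<subseteq> {0, 1}}"
definition ksat_sat :: "nat list \<Rightarrow> nat list \<Rightarrow> bool" where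
  "ksat_sat a xs \<longleftrightarrow> xs \<noteq> a"
definition naesat_sat :: "nat list \<Rightarrow> nat list \<Rightarrow> bool" where
  "naesat_sat a xs \<longleftrightarrow> xs \<noteq> a \<and> xs \<noteq> map (\<lambda>b. 1 - b) a"

definition H_threshold :: "(real \<Rightarrow> real) \<Rightarrow> bool" where
  "H_threshold h \<longleftrightarrow> (\<exists>cs::real. (\<forall>c. 0 < c \<and> c < cs \<longrightarrow> h c = c) \<and>
                                  (\<forall>c. 0 < c \<and> cs < c \<longrightarrow> h c < c))"
definition p_threshold :: "(real \<Rightarrow> real) \<Rightarrow> bool" where
  "p_threshold pf \<longleftrightarrow> (\<exists>cs::real. (\<forall>c. 0 < c \<and> c < cs \<longrightarrow> pf c = 0) \<and>
                                   (\<forall>c. 0 < c \<and> cs < c \<longrightarrow> pf c < 0))"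

end

theory Submission
  imports Defs
begin


definition Edges :: "nat \<Rightarrow> nat list set \<Rightarrow> nat \<Rightarrow> hyperedge set" where
  "Edges K L N = {v. set v \<subseteq> {0..<N} \<and> length v = K} \<times> L"

definition Xs :: "nat \<Rightarrow> nat \<Rightarrow> (nat \<Rightarrow> nat) set" where
  "Xs q N = Pi\<^sub>E {0..<N} (\<lambda>_. {0..<q})"

definition viol :: "(nat list \<Rightarrow> nat list \<Rightarrow> bool) \<Rightarrow> (nat \<Rightarrow> nat) \<Rightarrow> hyperedge \<Rightarrow> bool" where
  "viol sat x e = (\<not> sat (snd e) (map x (fst e)))"

definition nviol :: "(nat list \<Rightarrow> nat list \<Rightarrow> bool) \<Rightarrow> hyperedge list \<Rightarrow> (nat \<Rightarrow> nat) \<Rightarrow> nat" where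
  "nviol sat G x = length (filter (viol sat x) G)"

lemma inst_eq: "instances K L N M = {G. set G \<subseteq> Edges K L N \<and> length G = M}"
  unfolding instances_def Edges_def by fastforce

lemma finite_Edges: "finite L \<Longrightarrow> finite (Edges K L N)"
  unfolding Edges_def by (auto intro: finite_lists_length_eq)

lemma finite_inst: "finite L \<Longrightarrow> finite (instances K L N M)"
  unfolding inst_eq by (auto intro: finite_lists_length_eq finite_Edges)

lemma card_inst: "finite L \<Longrightarrow> card (instances K L N M) = card (Edges K L N) ^ M"
  unfolding inst_eq by (auto intro: card_lists_length_eq finite_Edges)

lemma Edges_ne: "L \<noteq> {} \<Longrightarrow> N \<ge> 1 \<Longrightarrow> Edges K L N \<noteq> {}"
proof -
  assume "L \<noteq> {}" "N \<ge> 1"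
  then obtain a where "a \<in> L" by auto
  then have "(replicate K 0, a) \<in> Edges K L N" using \<open>N \<ge> 1\<close> unfolding Edges_def by auto
  then show ?thesis by auto
qed

lemma card_Edges_pos: "finite L \<Longrightarrow> L \<noteq> {} \<Longrightarrow> N \<ge> 1 \<Longrightarrow> card (Edges K L N) > 0"
  using Edges_ne finite_Edges by (simp add: card_gt_0_iff)

lemma card_inst_pos: "finite L \<Longrightarrow> L \<noteq> {} \<Longrightarrow> N \<ge> 1 \<Longrightarrow> card (instances K L N M) > 0"
  using card_Edges_pos card_inst by simp

lemma Hval_nviol: "Hval sat G x + nviol sat G x = length G"
proof -
  have "(\<lambda>(v, a). sat a (map x v)) = (\<lambda>e. \<not> viol sat x e)"
    by (auto simp: viol_def)
  then show ?thesis unfolding Hval_def nviol_def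
    using sum_length_filter_compl[of "\<lambda>e. \<not> viol sat x e" G] by simp
qed

lemma Xs_fin: "finite (Xs q N)" unfolding Xs_def by (auto intro: finite_PiE)
lemma Xs_card: "card (Xs q N) = q ^ N" unfolding Xs_def by (simp add: card_PiE)
lemma Xs_ne: "q \<ge> 1 \<Longrightarrow> Xs q N \<noteq> {}" unfolding Xs_def by (auto simp: PiE_eq_empty_iff)

lemma energy_Xs: "energy q sat N G = Max (Hval sat G ` Xs q N)"
  unfolding energy_def Xs_def by simp

lemma energy_attained: "q \<ge> 1 \<Longrightarrow> \<exists>x\<in>Xs q N. energy q sat N G = Hval sat G x"
  unfolding energy_Xs using Max_in[of "Hval sat G ` Xs q N"] Xs_fin Xs_ne by fastforce

lemma Hval_le_energy: "x \<in> Xs q N \<Longrightarrow> Hval sat G x \<le> energy q sat N G"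
  unfolding energy_Xs using Xs_fin by auto

lemma energy_le: "q \<ge> 1 \<Longrightarrow> energy q sat N G \<le> length G"
  using energy_attained[of q N sat G] Hval_nviol[of sat G] by (metis le_add1)

lemma Hval_append: "Hval sat (G1 @ G2) x = Hval sat G1 x + Hval sat G2 x"
  unfolding Hval_def by simp

lemma energy_take: "q \<ge> 1 \<Longrightarrow> energy q sat N G \<le> energy q sat N (take M G) + (length G - M)"
proof -
  assume q: "q \<ge> 1"
  obtain x where x: "x \<in> Xs q N" "energy q sat N G = Hval sat G x" using energy_attained[OF q] by blast
  have "Hval sat G x = Hval sat (take M G) x + Hval sat (drop M G) x"
    using Hval_append[of sat "take M G" "drop M G" x] by simp
  also have "Hval sat (drop M G) x \<le> length G - M"
    using Hval_nviol[of sat "drop M G" x] by simp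
  also have "Hval sat (take M G) x \<le> energy q sat N (take M G)" using Hval_le_energy[OF x(1)] .
  finally show ?thesis using x(2) by simp
qed



lemma inst_split:
  assumes "M \<le> M'"
  shows "{G \<in> instances K L N M'. P (take M G)} =
     (\<lambda>(a,b). a @ b) ` ({G \<in> instances K L N M. P G} \<times> instances K L N (M' - M))"
proof (intro equalityI subsetI)
  fix G assume G: "G \<in> {G \<in> instances K L N M'. P (take M G)}"
  then have "take M G \<in> {G \<in> instances K L N M. P G}" "drop M G \<in> instances K L N (M' - M)"
    using assms unfolding inst_eq by (auto dest: in_set_takeD in_set_dropD)
  then show "G \<in> (\<lambda>(a,b). a @ b) ` ({G \<in> instances K L N M. P G} \<times> instances K L N (M' - M))"
    by (auto intro!: image_eqI[of _ _ "(take M G, drop M G)"])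
next
  fix G assume "G \<in> (\<lambda>(a,b). a @ b) ` ({G \<in> instances K L N M. P G} \<times> instances K L N (M' - M))"
  then show "G \<in> {G \<in> instances K L N M'. P (take M G)}"
    using assms unfolding inst_eq by auto
qed

lemma prob_take:
  assumes "M \<le> M'" "finite L" "L \<noteq> {}" "N \<ge> 1"
  shows "prob_ev K L N M' (\<lambda>G. P (take M G)) = prob_ev K L N M P"
proof -
  have inj: "inj_on (\<lambda>(a,b). a @ b) ({G \<in> instances K L N M. P G} \<times> instances K L N (M' - M))"
    unfolding inj_on_def inst_eq by auto
  have c1: "card {G \<in> instances K L N M'. P (take M G)} =
      card {G \<in> instances K L N M. P G} * card (instances K L N (M' - M))"
    unfolding inst_split[OF assms(1)] card_image[OF inj] card_cartesian_product ..
  have c2: "card (instances K L N M') = card (instances K L N M) * card (instances K L N (M' - M))"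
    using assms by (simp add: card_inst power_add[symmetric])
  have pos: "card (instances K L N (M' - M)) > 0" using card_inst_pos assms by blast
  show ?thesis unfolding prob_ev_def c1 c2 using pos by simp
qed

lemma prob_mono: "(\<And>G. G \<in> instances K L N M \<Longrightarrow> P G \<Longrightarrow> Q G) \<Longrightarrow> finite L \<Longrightarrow>
   prob_ev K L N M P \<le> prob_ev K L N M Q"
  unfolding prob_ev_def
  by (intro divide_right_mono) (auto intro!: card_mono finite_inst)

lemma prob_compl: "finite L \<Longrightarrow> L \<noteq> {} \<Longrightarrow> N \<ge> 1 \<Longrightarrow>
   prob_ev K L N M P + prob_ev K L N M (\<lambda>G. \<not> P G) = 1"
proof -
  assume a: "finite L" "L \<noteq> {}" "N \<ge> 1"
  have "card {G \<in> instances K L N M. P G} + card {G \<in> instances K L N M. \<not> P G} = card (instances K L N M)"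
  proof -
    have u: "{G \<in> instances K L N M. P G} \<union> {G \<in> instances K L N M. \<not> P G} = instances K L N M" by auto
    have "card ({G \<in> instances K L N M. P G} \<union> {G \<in> instances K L N M. \<not> P G}) =
      card {G \<in> instances K L N M. P G} + card {G \<in> instances K L N M. \<not> P G}"
      by (rule card_Un_disjoint) (use finite_inst[OF a(1)] in auto)
    then show ?thesis unfolding u by simp
  qed
  then show ?thesis unfolding prob_ev_def using card_inst_pos[OF a]
    by (simp add: add_divide_distrib[symmetric])
qed

lemma prob_nonneg: "prob_ev K L N M P \<ge> 0" unfolding prob_ev_def by simp

lemma prob_le1: "finite L \<Longrightarrow> prob_ev K L N M P \<le> 1"
  unfolding prob_ev_def by (cases "card (instances K L N M) = 0") (auto simp: divide_le_eq_1 card_mono finite_inst)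

lemma prob_all: "finite L \<Longrightarrow> L \<noteq> {} \<Longrightarrow> N \<ge> 1 \<Longrightarrow> (\<And>G. G \<in> instances K L N M \<Longrightarrow> P G) \<Longrightarrow>
   prob_ev K L N M P = 1"
proof -
  assume a: "finite L" "L \<noteq> {}" "N \<ge> 1" "\<And>G. G \<in> instances K L N M \<Longrightarrow> P G"
  then have "{G \<in> instances K L N M. P G} = instances K L N M" by auto
  then show ?thesis unfolding prob_ev_def using card_inst_pos[OF a(1-3)] by simp
qed

lemma sum_weight:
  fixes s :: real
  shows "finite L \<Longrightarrow> (\<Sum>G\<in>instances K L N M. s ^ nviol sat G x) =
     (real (card (Edges K L N)) - (1 - s) * real (card {e \<in> Edges K L N. viol sat x e})) ^ M"
proof (induction M)
  case 0
  have "instances K L N 0 = {[]}" unfolding inst_eq by auto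
  then show ?case by (simp add: nviol_def)
next
  case (Suc M)
  let ?E = "Edges K L N"
  let ?I = "instances K L N M"
  have eq: "instances K L N (Suc M) = (\<lambda>(xs, n). n#xs) ` (?I \<times> ?E)"
    unfolding inst_eq by (rule lists_length_Suc_eq)
  have inj: "inj_on (\<lambda>(xs, n). n#xs) (?I \<times> ?E)" by (auto simp: inj_on_def)
  have fE: "finite ?E" using finite_Edges Suc.prems .
  have "(\<Sum>G\<in>instances K L N (Suc M). s ^ nviol sat G x) =
      (\<Sum>p\<in>?I \<times> ?E. s ^ nviol sat (snd p # fst p) x)"
    unfolding eq by (subst sum.reindex[OF inj]) (simp add: case_prod_beta)
  also have "\<dots> = (\<Sum>G\<in>?I. \<Sum>e\<in>?E. s ^ nviol sat G x * (if viol sat x e then s else 1))"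
    unfolding sum.cartesian_product
    by (intro sum.cong refl) (auto simp: nviol_def split: prod.splits)
  also have "\<dots> = (\<Sum>G\<in>?I. s ^ nviol sat G x) * (\<Sum>e\<in>?E. (if viol sat x e then s else 1))"
    by (rule sum_product[symmetric])
  also have "(\<Sum>e\<in>?E. (if viol sat x e then s else 1)) =
     real (card ?E) - (1 - s) * real (card {e \<in> ?E. viol sat x e})"
  proof -
    have "(\<Sum>e\<in>?E. (if viol sat x e then s else 1)) = (\<Sum>e\<in>?E. 1 - (1 - s) * (if viol sat x e then 1 else 0))"
      by (intro sum.cong) auto
    also have "\<dots> = real (card ?E) - (1 - s) * (\<Sum>e\<in>?E. (if viol sat x e then 1 else 0))"
      by (simp add: sum_subtractf sum_distrib_left)
    also have "(\<Sum>e\<in>?E. (if viol sat x e then 1 else 0::real)) = real (card {e \<in> ?E. viol sat x e})"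
      using fE by (simp add: sum.If_cases Int_def)
    finally show ?thesis .
  qed
  finally show ?case using Suc.IH[OF Suc.prems] by simp
qed



lemma card_few_viol:
  assumes fL: "finite L" and r0: "0 \<le> r0"
    and vb: "r0 * real (card (Edges K L N)) \<le> real (card {e \<in> Edges K L N. viol sat x e})"
  shows "real (card {G \<in> instances K L N M. nviol sat G x \<le> t})
     \<le> 2 ^ t * real (card (Edges K L N)) ^ M * (1 - r0 / 2) ^ M"
proof -
  let ?I = "instances K L N M"
  let ?E = "real (card (Edges K L N))"
  let ?V = "real (card {e \<in> Edges K L N. viol sat x e})"
  have fI: "finite ?I" using finite_inst[OF fL] .
  have "real (card {G \<in> ?I. nviol sat G x \<le> t}) * (1/2) ^ t
      = (\<Sum>G\<in>{G \<in> ?I. nviol sat G x \<le> t}. (1/2::real) ^ t)" by simp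
  also have "\<dots> \<le> (\<Sum>G\<in>{G \<in> ?I. nviol sat G x \<le> t}. (1/2::real) ^ nviol sat G x)"
    by (intro sum_mono power_decreasing) auto
  also have "\<dots> \<le> (\<Sum>G\<in>?I. (1/2::real) ^ nviol sat G x)"
    by (intro sum_mono2 fI) auto
  also have "\<dots> = (?E - (1 - 1/2) * ?V) ^ M" using sum_weight[OF fL] by blast
  also have "\<dots> \<le> (?E * (1 - r0/2)) ^ M"
  proof (rule power_mono)
    have "?V \<le> ?E" using card_mono[OF finite_Edges[OF fL], of "{e \<in> Edges K L N. viol sat x e}"] by auto
    then show "0 \<le> ?E - (1 - 1/2) * ?V" by simp
    show "?E - (1 - 1/2) * ?V \<le> ?E * (1 - r0/2)" using vb by (simp add: algebra_simps)
  qed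
  finally have "real (card {G \<in> ?I. nviol sat G x \<le> t}) * (1/2) ^ t \<le> (?E * (1 - r0/2)) ^ M" .
  then have "real (card {G \<in> ?I. nviol sat G x \<le> t}) \<le> 2 ^ t * (?E * (1 - r0/2)) ^ M"
    by (simp add: power_one_over field_simps)
  then show ?thesis by (simp add: power_mult_distrib mult.assoc)
qed

lemma tail_bound:
  assumes fL: "finite L" and Lne: "L \<noteq> {}" and N: "N \<ge> 1" and q: "q \<ge> 1" and r0: "0 \<le> r0"
    and vb: "\<forall>x\<in>Xs q N. r0 * real (card (Edges K L N)) \<le> real (card {e \<in> Edges K L N. viol sat x e})"
  shows "prob_ev K L N M (\<lambda>G. M \<le> energy q sat N G + t) \<le> real q ^ N * 2 ^ t * (1 - r0/2) ^ M"
proof -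
  let ?I = "instances K L N M"
  let ?E = "real (card (Edges K L N))"
  have sub: "{G \<in> ?I. M \<le> energy q sat N G + t} \<subseteq> (\<Union>x\<in>Xs q N. {G \<in> ?I. nviol sat G x \<le> t})"
  proof
    fix G assume G: "G \<in> {G \<in> ?I. M \<le> energy q sat N G + t}"
    obtain x where x: "x \<in> Xs q N" "energy q sat N G = Hval sat G x" using energy_attained[OF q] by blast
    have "length G = M" using G unfolding inst_eq by auto
    then have "nviol sat G x \<le> t" using G x Hval_nviol[of sat G x] by auto
    then show "G \<in> (\<Union>x\<in>Xs q N. {G \<in> ?I. nviol sat G x \<le> t})" using G x by auto
  qed
  have "real (card {G \<in> ?I. M \<le> energy q sat N G + t}) \<le> real (card (\<Union>x\<in>Xs q N. {G \<in> ?I. nviol sat G x \<le> t}))"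
    using card_mono[OF _ sub] finite_inst[OF fL] by (simp add: finite_UN_I Xs_fin)
  also have "\<dots> \<le> real (\<Sum>x\<in>Xs q N. card {G \<in> ?I. nviol sat G x \<le> t})"
    using card_UN_le[OF Xs_fin] by (simp only: of_nat_le_iff)
  also have "\<dots> = (\<Sum>x\<in>Xs q N. real (card {G \<in> ?I. nviol sat G x \<le> t}))" by simp
  also have "\<dots> \<le> (\<Sum>x\<in>Xs q N. 2 ^ t * ?E ^ M * (1 - r0 / 2) ^ M)"
    using card_few_viol[OF fL r0] vb by (intro sum_mono) auto
  also have "\<dots> = real q ^ N * (2 ^ t * ?E ^ M * (1 - r0 / 2) ^ M)" by (simp add: Xs_card)
  finally have *: "real (card {G \<in> ?I. M \<le> energy q sat N G + t}) \<le> real q ^ N * (2 ^ t * ?E ^ M * (1 - r0 / 2) ^ M)" .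
  have pos: "?E ^ M > 0" using card_Edges_pos[OF fL Lne N] by simp
  have ci: "real (card ?I) = ?E ^ M" using card_inst[OF fL] by simp
  show ?thesis unfolding prob_ev_def ci using * pos
    by (simp add: divide_le_eq field_simps)
qed



lemma threshold_gen:
  fixes f :: "real \<Rightarrow> real"
  assumes le0: "\<And>c. 0 < c \<Longrightarrow> f c \<le> 0"
    and mono: "\<And>c c'. 0 < c \<Longrightarrow> c \<le> c' \<Longrightarrow> f c' \<le> f c"
    and C: "0 < C" "f C < 0"
  shows "\<exists>cs. (\<forall>c. 0 < c \<and> c < cs \<longrightarrow> f c = 0) \<and> (\<forall>c. 0 < c \<and> cs < c \<longrightarrow> f c < 0)"
proof -
  define S where "S = {c. 0 < c \<and> f c = 0} \<union> {0}"
  have bdd: "bdd_above S"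
  proof
    fix c assume "c \<in> S"
    then show "c \<le> C" unfolding S_def using mono[of C c] C by force
  qed
  have ne: "S \<noteq> {}" unfolding S_def by auto
  show ?thesis
  proof (intro exI[of _ "Sup S"] conjI allI impI)
    fix c assume c: "0 < c \<and> c < Sup S"
    then obtain d where d: "d \<in> S" "c < d" using less_cSup_iff[OF ne bdd] by auto
    then have "0 < d" "f d = 0" using c unfolding S_def by auto
    then have "f c \<ge> 0" using mono[of c d] c d by auto
    then show "f c = 0" using le0[of c] c by auto
  next
    fix c assume c: "0 < c \<and> Sup S < c"
    have "f c \<noteq> 0"
    proof
      assume "f c = 0"
      then have "c \<in> S" using c unfolding S_def by auto
      then have "c \<le> Sup S" using cSup_upper[OF _ bdd] by auto
      then show False using c by auto
    qed
    then show "f c < 0" using le0[of c] c by auto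
  qed
qed

lemma eventually_ex_N:
  assumes "eventually P sequentially"
  shows "\<exists>N. N \<ge> n \<and> P N"
  using assms unfolding eventually_sequentially by (metis nat_le_linear le_refl)

lemma floor_le: "0 < c \<Longrightarrow> real (nat \<lfloor>c * real N\<rfloor>) \<le> c * real N"
  by simp

lemma floor_mono_nat: "c \<le> c' \<Longrightarrow> nat \<lfloor>c * real N\<rfloor> \<le> nat \<lfloor>c' * real N\<rfloor>"
  by (intro nat_mono floor_mono mult_right_mono) auto

lemma floor_diff: "0 < c \<Longrightarrow> c \<le> c' \<Longrightarrow>
   real (nat \<lfloor>c' * real N\<rfloor> - nat \<lfloor>c * real N\<rfloor>) \<le> (c' - c) * real N + 1"
proof -
  assume a: "0 < c" "c \<le> c'"
  have m: "nat \<lfloor>c * real N\<rfloor> \<le> nat \<lfloor>c' * real N\<rfloor>" using floor_mono_nat[OF a(2)] .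
  have e: "real (nat \<lfloor>c' * real N\<rfloor> - nat \<lfloor>c * real N\<rfloor>) = real (nat \<lfloor>c' * real N\<rfloor>) - real (nat \<lfloor>c * real N\<rfloor>)"
    using m by (simp add: of_nat_diff)
  have "real (nat \<lfloor>c' * real N\<rfloor>) \<le> c' * real N" using a by simp
  moreover have "real (nat \<lfloor>c * real N\<rfloor>) \<ge> c * real N - 1"
    using a by (simp add: of_nat_nat)
  ultimately show ?thesis unfolding e by (simp add: algebra_simps)
qed



lemma len_inst: "G \<in> instances K L N M \<Longrightarrow> length G = M"
  unfolding instances_def by auto

lemma energy_div_le:
  assumes "q \<ge> 1" "G \<in> instances K L N (nat \<lfloor>c * real N\<rfloor>)" "0 < c" "N \<ge> 1"
  shows "real (energy q sat N G) / real N \<le> c"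
proof -
  have "real (energy q sat N G) \<le> real (nat \<lfloor>c * real N\<rfloor>)"
    using energy_le[OF assms(1), of sat N G] len_inst[OF assms(2)] by simp
  also have "\<dots> \<le> c * real N" using assms(3) by simp
  finally show ?thesis using assms(4) by (simp add: divide_le_eq)
qed

lemma H_le:
  assumes fL: "finite L" and Lne: "L \<noteq> {}" and q: "q \<ge> 1"
    and lim: "is_H_limit K q L sat h" and c: "0 < c"
  shows "h c \<le> c"
proof (rule ccontr)
  assume "\<not> h c \<le> c"
  define \<epsilon> where "\<epsilon> = (h c - c) / 2"
  have \<epsilon>: "\<epsilon> > 0" using \<open>\<not> h c \<le> c\<close> unfolding \<epsilon>_def by simp
  have L: "(\<lambda>N. prob_ev K L N (nat \<lfloor>c * real N\<rfloor>)
              (\<lambda>G. \<bar>real (energy q sat N G) / real N - h c\<bar> > \<epsilon>)) \<longlonglongrightarrow> 0"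
    using lim c \<epsilon> unfolding is_H_limit_def by blast
  obtain N where N: "N \<ge> 1" "prob_ev K L N (nat \<lfloor>c * real N\<rfloor>)
              (\<lambda>G. \<bar>real (energy q sat N G) / real N - h c\<bar> > \<epsilon>) < 1"
    using eventually_ex_N[OF order_tendstoD(2)[OF L, of 1]] by auto
  have "prob_ev K L N (nat \<lfloor>c * real N\<rfloor>)
              (\<lambda>G. \<bar>real (energy q sat N G) / real N - h c\<bar> > \<epsilon>) = 1"
  proof (rule prob_all[OF fL Lne N(1)])
    fix G assume G: "G \<in> instances K L N (nat \<lfloor>c * real N\<rfloor>)"
    have "real (energy q sat N G) / real N \<le> c" using energy_div_le[OF q G c N(1)] .
    then show "\<bar>real (energy q sat N G) / real N - h c\<bar> > \<epsilon>" unfolding \<epsilon>_def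
      using \<open>\<not> h c \<le> c\<close> by auto
  qed
  then show False using N(2) by simp
qed

lemma H_mono:
  assumes fL: "finite L" and Lne: "L \<noteq> {}" and q: "q \<ge> 1"
    and lim: "is_H_limit K q L sat h" and c: "0 < c" "c \<le> c'"
  shows "h c' - c' \<le> h c - c"
proof (rule ccontr)
  assume A: "\<not> h c' - c' \<le> h c - c"
  define d where "d = (h c' - c') - (h c - c)"
  have d: "d > 0" using A unfolding d_def by simp
  define \<epsilon> where "\<epsilon> = d / 4"
  have \<epsilon>: "\<epsilon> > 0" using d unfolding \<epsilon>_def by simp
  have c': "0 < c'" using c by simp
  define M where "M N = nat \<lfloor>c * real N\<rfloor>" for N
  define M' where "M' N = nat \<lfloor>c' * real N\<rfloor>" for N
  have L1: "(\<lambda>N. prob_ev K L N (M N)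
              (\<lambda>G. \<bar>real (energy q sat N G) / real N - h c\<bar> > \<epsilon>)) \<longlonglongrightarrow> 0"
    using lim c \<epsilon> unfolding is_H_limit_def M_def by blast
  have L2: "(\<lambda>N. prob_ev K L N (M' N)
              (\<lambda>G. \<bar>real (energy q sat N G) / real N - h c'\<bar> > \<epsilon>)) \<longlonglongrightarrow> 0"
    using lim c' \<epsilon> unfolding is_H_limit_def M'_def by blast
  have ev: "eventually (\<lambda>N. real N > 2 / d) sequentially"
    by (rule eventually_sequentiallyI[of "nat \<lceil>2 / d\<rceil> + 1"]) linarith
  obtain N where N: "N \<ge> 1" "real N > 2 / d"
     "prob_ev K L N (M N) (\<lambda>G. \<bar>real (energy q sat N G) / real N - h c\<bar> > \<epsilon>) < 1/2"
     "prob_ev K L N (M' N) (\<lambda>G. \<bar>real (energy q sat N G) / real N - h c'\<bar> > \<epsilon>) < 1/2"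
    using eventually_ex_N[OF eventually_conj[OF ev eventually_conj[OF order_tendstoD(2)[OF L1, of "1/2"] order_tendstoD(2)[OF L2, of "1/2"]]], of 1]
    by auto
  have MM: "M N \<le> M' N" unfolding M_def M'_def using floor_mono_nat[OF c(2)] .
  let ?B1 = "\<lambda>G. \<bar>real (energy q sat N (take (M N) G)) / real N - h c\<bar> > \<epsilon>"
  let ?B2 = "\<lambda>G. \<bar>real (energy q sat N G) / real N - h c'\<bar> > \<epsilon>"
  have p1: "prob_ev K L N (M' N) ?B1 < 1/2"
    using prob_take[OF MM fL Lne N(1), where P="\<lambda>G. \<bar>real (energy q sat N G) / real N - h c\<bar> > \<epsilon>"] N(3) by simp
  have "prob_ev K L N (M' N) (\<lambda>G. ?B1 G \<or> ?B2 G) \<le> prob_ev K L N (M' N) ?B1 + prob_ev K L N (M' N) ?B2"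
  proof -
    have "card {G \<in> instances K L N (M' N). ?B1 G \<or> ?B2 G} \<le>
       card {G \<in> instances K L N (M' N). ?B1 G} + card {G \<in> instances K L N (M' N). ?B2 G}"
    proof -
      have "{G \<in> instances K L N (M' N). ?B1 G \<or> ?B2 G} =
          {G \<in> instances K L N (M' N). ?B1 G} \<union> {G \<in> instances K L N (M' N). ?B2 G}" by auto
      then show ?thesis by (simp add: card_Un_le)
    qed
    then show ?thesis unfolding prob_ev_def
      by (simp add: add_divide_distrib[symmetric] divide_right_mono)
  qed
  also have "\<dots> < 1" using p1 N(4) by simp
  finally have "prob_ev K L N (M' N) (\<lambda>G. ?B1 G \<or> ?B2 G) < 1" .
  then have "prob_ev K L N (M' N) (\<lambda>G. \<not> (?B1 G \<or> ?B2 G)) > 0"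
    using prob_compl[OF fL Lne N(1), of K "M' N" "\<lambda>G. ?B1 G \<or> ?B2 G"] by simp
  then have "{G \<in> instances K L N (M' N). \<not> (?B1 G \<or> ?B2 G)} \<noteq> {}"
    unfolding prob_ev_def by (metis card.empty div_0 less_irrefl of_nat_0)
  then obtain G where G: "G \<in> instances K L N (M' N)" "\<not> ?B1 G" "\<not> ?B2 G" by auto
  have lenG: "length G = M' N" using len_inst[OF G(1)] .
  have "real (energy q sat N G) \<le> real (energy q sat N (take (M N) G)) + real (M' N - M N)"
    using energy_take[OF q, of sat N G "M N"] lenG by linarith
  also have "real (M' N - M N) \<le> (c' - c) * real N + 1"
    unfolding M_def M'_def using floor_diff[OF c] .
  finally have e: "real (energy q sat N G) / real N \<le>
       real (energy q sat N (take (M N) G)) / real N + (c' - c) + 1 / real N"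
    using N(1) by (simp add: divide_simps algebra_simps)
  have "1 / real N < d / 2" using N(1,2) d by (simp add: field_simps)
  moreover have "real (energy q sat N (take (M N) G)) / real N \<le> h c + \<epsilon>" using G(2) by auto
  moreover have "real (energy q sat N G) / real N \<ge> h c' - \<epsilon>" using G(3) by auto
  ultimately show False using e d_def \<epsilon>_def by linarith
qed



lemma exists_k:
  assumes q: "q \<ge> 1" and r0: "0 < r0" "r0 \<le> 1"
  shows "\<exists>k::nat. k \<ge> 1 \<and> 2 * real q * (1 - r0/2) ^ k \<le> 1/2"
proof -
  have "(\<lambda>k. (1 - r0/2) ^ k) \<longlonglongrightarrow> 0" using r0 by (intro LIMSEQ_power_zero) auto
  then have "(\<lambda>k. 2 * real q * (1 - r0/2) ^ k) \<longlonglongrightarrow> 2 * real q * 0"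
    by (intro tendsto_mult_left)
  then have "eventually (\<lambda>k. 2 * real q * (1 - r0/2) ^ k < 1/2) sequentially"
    by (intro order_tendstoD(2)) auto
  then show ?thesis using eventually_ex_N[of _ 1] by (meson less_imp_le)
qed

lemma tail_k:
  assumes fL: "finite L" and Lne: "L \<noteq> {}" and N: "N \<ge> 1" and q: "q \<ge> 1" and r0: "0 < r0" "r0 \<le> 1"
    and vb: "\<forall>x\<in>Xs q N. r0 * real (card (Edges K L N)) \<le> real (card {e \<in> Edges K L N. viol sat x e})"
    and k: "2 * real q * (1 - r0/2) ^ k \<le> 1/2"
    and t: "t \<le> N"
  shows "prob_ev K L N (k * N) (\<lambda>G. k * N \<le> energy q sat N G + t) \<le> (1/2) ^ N"
proof -
  have "prob_ev K L N (k * N) (\<lambda>G. k * N \<le> energy q sat N G + t) \<le> real q ^ N * 2 ^ t * (1 - r0/2) ^ (k * N)"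
    using tail_bound[OF fL Lne N q _ vb] r0 by simp
  also have "\<dots> \<le> real q ^ N * 2 ^ N * (1 - r0/2) ^ (k * N)"
    using t r0 by (intro mult_right_mono mult_left_mono power_increasing) auto
  also have "\<dots> = (2 * real q * (1 - r0/2) ^ k) ^ N"
    by (simp add: power_mult[symmetric] power_mult_distrib mult_ac)
  also have "\<dots> \<le> (1/2) ^ N"
    using k r0 by (intro power_mono) auto
  finally show ?thesis .
qed

lemma floor_nat_k: "nat \<lfloor>real k * real N\<rfloor> = k * N"
  by (metis floor_of_nat nat_int of_nat_mult)

lemma H_lt:
  assumes fL: "finite L" and Lne: "L \<noteq> {}" and q: "q \<ge> 1" and r0: "0 < r0" "r0 \<le> 1"
    and vb: "\<forall>N\<ge>1. \<forall>x\<in>Xs q N. r0 * real (card (Edges K L N)) \<le> real (card {e \<in> Edges K L N. viol sat x e})"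
    and k: "k \<ge> 1" "2 * real q * (1 - r0/2) ^ k \<le> 1/2"
    and lim: "is_H_limit K q L sat h"
  shows "h (real k) < real k"
proof (rule ccontr)
  assume A: "\<not> h (real k) < real k"
  have L: "(\<lambda>N. prob_ev K L N (k * N)
              (\<lambda>G. \<bar>real (energy q sat N G) / real N - h (real k)\<bar> > 1/4)) \<longlonglongrightarrow> 0"
  proof -
    have "real k > 0" using k by simp
    then have "(\<lambda>N. prob_ev K L N (nat \<lfloor>real k * real N\<rfloor>)
              (\<lambda>G. \<bar>real (energy q sat N G) / real N - h (real k)\<bar> > 1/4)) \<longlonglongrightarrow> 0"
      using lim unfolding is_H_limit_def by (meson zero_less_divide_1_iff zero_less_numeral)
    then show ?thesis unfolding floor_nat_k .
  qed
  obtain N where N: "N \<ge> 1" "prob_ev K L N (k * N)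
              (\<lambda>G. \<bar>real (energy q sat N G) / real N - h (real k)\<bar> > 1/4) < 1/2"
    using eventually_ex_N[OF order_tendstoD(2)[OF L, of "1/2"]] by auto
  have "prob_ev K L N (k * N) (\<lambda>G. \<not> \<bar>real (energy q sat N G) / real N - h (real k)\<bar> > 1/4)
      \<le> prob_ev K L N (k * N) (\<lambda>G. k * N \<le> energy q sat N G + N)"
  proof (rule prob_mono[OF _ fL])
    fix G assume "\<not> \<bar>real (energy q sat N G) / real N - h (real k)\<bar> > 1/4"
    then have "\<bar>real (energy q sat N G) / real N - h (real k)\<bar> \<le> 1/4" by simp
    then have "real (energy q sat N G) / real N \<ge> real k - 1/4" using A by linarith
    then have "real (energy q sat N G) \<ge> (real k - 1/4) * real N" using N(1) by (simp add: field_simps)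
    then have "real (energy q sat N G) + real N \<ge> real k * real N" by (simp add: algebra_simps)
    then have "real (k * N) \<le> real (energy q sat N G + N)" by simp
    then show "k * N \<le> energy q sat N G + N" by (simp only: of_nat_le_iff)
  qed
  also have "\<dots> \<le> (1/2) ^ N" using tail_k[OF fL Lne N(1) q r0 _ k(2)] vb N(1) by simp
  also have "\<dots> \<le> 1/2" using power_decreasing[OF N(1), of "1/2::real"] by simp
  finally have "prob_ev K L N (k * N) (\<lambda>G. \<not> \<bar>real (energy q sat N G) / real N - h (real k)\<bar> > 1/4) \<le> 1/2" .
  moreover have "prob_ev K L N (k * N) (\<lambda>G. \<bar>real (energy q sat N G) / real N - h (real k)\<bar> > 1/4)
     + prob_ev K L N (k * N) (\<lambda>G. \<not> \<bar>real (energy q sat N G) / real N - h (real k)\<bar> > 1/4) = 1"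
    by (rule prob_compl[OF fL Lne N(1)])
  ultimately show False using N(2) by linarith
qed



lemma p_pos:
  assumes fL: "finite L" and Lne: "L \<noteq> {}" and q: "q \<ge> 1" and N: "N \<ge> 1"
    and s: "e \<in> Edges K L N" "x \<in> Xs q N" "\<not> viol sat x e"
  shows "pNM K q L sat N M > 0"
proof -
  let ?G = "replicate M e"
  have G: "?G \<in> instances K L N M" using s(1) unfolding inst_eq by auto
  have "nviol sat ?G x = 0" using s(3) unfolding nviol_def by simp
  then have "Hval sat ?G x = M" using Hval_nviol[of sat ?G x] by simp
  then have "energy q sat N ?G = M"
    using Hval_le_energy[OF s(2), of sat ?G] energy_le[OF q, of sat N ?G] by simp
  then have "?G \<in> {G \<in> instances K L N M. energy q sat N G = M}" using G by simp
  then have "card {G \<in> instances K L N M. energy q sat N G = M} > 0"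
    using finite_inst[OF fL] by (auto simp: card_gt_0_iff)
  then show ?thesis unfolding pNM_def prob_ev_def using card_inst_pos[OF fL Lne N] by simp
qed

lemma p_mono:
  assumes fL: "finite L" and Lne: "L \<noteq> {}" and q: "q \<ge> 1" and N: "N \<ge> 1" and M: "M \<le> M'"
  shows "pNM K q L sat N M' \<le> pNM K q L sat N M"
proof -
  have "pNM K q L sat N M' \<le> prob_ev K L N M' (\<lambda>G. energy q sat N (take M G) = M)"
    unfolding pNM_def
  proof (rule prob_mono[OF _ fL])
    fix G assume G: "G \<in> instances K L N M'" "energy q sat N G = M'"
    have l: "length G = M'" using len_inst[OF G(1)] .
    have "M' \<le> energy q sat N (take M G) + (M' - M)" using energy_take[OF q, of sat N G M] G(2) l by simp
    moreover have "energy q sat N (take M G) \<le> M" using energy_le[OF q, of sat N "take M G"] l M by simp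
    ultimately show "energy q sat N (take M G) = M" using M by linarith
  qed
  also have "\<dots> = pNM K q L sat N M" unfolding pNM_def using prob_take[OF M fL Lne N] .
  finally show ?thesis .
qed

lemma pf_le0:
  assumes fL: "finite L" and lim: "is_p_limit K q L sat pf" and c: "0 < c"
  shows "pf c \<le> 0"
proof -
  have L: "(\<lambda>N. ln (pNM K q L sat N (nat \<lfloor>c * real N\<rfloor>)) / real N) \<longlonglongrightarrow> pf c"
    using lim c unfolding is_p_limit_def by blast
  have "\<And>N. ln (pNM K q L sat N (nat \<lfloor>c * real N\<rfloor>)) / real N \<le> 0"
  proof -
    fix N
    have "ln (pNM K q L sat N (nat \<lfloor>c * real N\<rfloor>)) \<le> 0"
    proof (cases "pNM K q L sat N (nat \<lfloor>c * real N\<rfloor>) = 0")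
      case True then show ?thesis by simp
    next
      case False
      then have "pNM K q L sat N (nat \<lfloor>c * real N\<rfloor>) > 0" using prob_nonneg unfolding pNM_def
        by (metis less_eq_real_def)
      then show ?thesis using prob_le1[OF fL] unfolding pNM_def by simp
    qed
    then show "ln (pNM K q L sat N (nat \<lfloor>c * real N\<rfloor>)) / real N \<le> 0" by (simp add: divide_nonpos_nonneg)
  qed
  then show ?thesis using LIMSEQ_le_const2[OF L] by blast
qed

lemma pf_mono:
  assumes fL: "finite L" and Lne: "L \<noteq> {}" and q: "q \<ge> 1"
    and sat: "\<forall>N\<ge>2. \<exists>e\<in>Edges K L N. \<exists>x\<in>Xs q N. \<not> viol sat x e"
    and lim: "is_p_limit K q L sat pf" and c: "0 < c" "c \<le> c'"
  shows "pf c' \<le> pf c"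
proof -
  have L: "(\<lambda>N. ln (pNM K q L sat N (nat \<lfloor>c * real N\<rfloor>)) / real N) \<longlonglongrightarrow> pf c"
    using lim c unfolding is_p_limit_def by blast
  have L': "(\<lambda>N. ln (pNM K q L sat N (nat \<lfloor>c' * real N\<rfloor>)) / real N) \<longlonglongrightarrow> pf c'"
  proof -
    have "0 < c'" using c by simp
    then show ?thesis using lim unfolding is_p_limit_def by blast
  qed
  have "eventually (\<lambda>N. ln (pNM K q L sat N (nat \<lfloor>c' * real N\<rfloor>)) / real N \<le>
      ln (pNM K q L sat N (nat \<lfloor>c * real N\<rfloor>)) / real N) sequentially"
  proof (rule eventually_sequentiallyI[of 2])
    fix N :: nat assume N: "N \<ge> 2"
    obtain e x where ex: "e \<in> Edges K L N" "x \<in> Xs q N" "\<not> viol sat x e" using sat N by blast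
    have pos: "pNM K q L sat N (nat \<lfloor>c' * real N\<rfloor>) > 0" using p_pos[OF fL Lne q _ ex] N by simp
    have le: "pNM K q L sat N (nat \<lfloor>c' * real N\<rfloor>) \<le> pNM K q L sat N (nat \<lfloor>c * real N\<rfloor>)"
      using p_mono[OF fL Lne q _ floor_mono_nat[OF c(2)]] N by simp
    have "ln (pNM K q L sat N (nat \<lfloor>c' * real N\<rfloor>)) \<le> ln (pNM K q L sat N (nat \<lfloor>c * real N\<rfloor>))"
      using pos le by simp
    then show "ln (pNM K q L sat N (nat \<lfloor>c' * real N\<rfloor>)) / real N \<le>
      ln (pNM K q L sat N (nat \<lfloor>c * real N\<rfloor>)) / real N" by (simp add: divide_right_mono)
  qed
  then show ?thesis using LIMSEQ_le[OF L' L] by (simp add: eventually_sequentially)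
qed

lemma pf_lt:
  assumes fL: "finite L" and Lne: "L \<noteq> {}" and q: "q \<ge> 1" and r0: "0 < r0" "r0 \<le> 1"
    and vb: "\<forall>N\<ge>1. \<forall>x\<in>Xs q N. r0 * real (card (Edges K L N)) \<le> real (card {e \<in> Edges K L N. viol sat x e})"
    and sat: "\<forall>N\<ge>2. \<exists>e\<in>Edges K L N. \<exists>x\<in>Xs q N. \<not> viol sat x e"
    and k: "k \<ge> 1" "2 * real q * (1 - r0/2) ^ k \<le> 1/2"
    and lim: "is_p_limit K q L sat pf"
  shows "pf (real k) < 0"
proof -
  have L: "(\<lambda>N. ln (pNM K q L sat N (k * N)) / real N) \<longlonglongrightarrow> pf (real k)"
  proof -
    have "real k > 0" using k by simp
    then have "(\<lambda>N. ln (pNM K q L sat N (nat \<lfloor>real k * real N\<rfloor>)) / real N) \<longlonglongrightarrow> pf (real k)"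
      using lim unfolding is_p_limit_def by blast
    then show ?thesis unfolding floor_nat_k .
  qed
  have "eventually (\<lambda>N. ln (pNM K q L sat N (k * N)) / real N \<le> ln (1/2)) sequentially"
  proof (rule eventually_sequentiallyI[of 2])
    fix N :: nat assume N: "N \<ge> 2"
    obtain e x where ex: "e \<in> Edges K L N" "x \<in> Xs q N" "\<not> viol sat x e" using sat N by blast
    have pos: "pNM K q L sat N (k * N) > 0" using p_pos[OF fL Lne q _ ex] N by simp
    have "pNM K q L sat N (k * N) \<le> prob_ev K L N (k * N) (\<lambda>G. k * N \<le> energy q sat N G + 0)"
      unfolding pNM_def by (rule prob_mono[OF _ fL]) auto
    also have "\<dots> \<le> (1/2) ^ N" using tail_k[OF fL Lne _ q r0 _ k(2), where N=N and sat=sat and t=0] vb N by simp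
    finally have "ln (pNM K q L sat N (k * N)) \<le> ln ((1/2) ^ N)" using pos by simp
    also have "\<dots> = real N * ln (1/2)" by (simp add: ln_realpow)
    finally show "ln (pNM K q L sat N (k * N)) / real N \<le> ln (1/2)" using N by (simp add: divide_simps mult.commute)
  qed
  then have "pf (real k) \<le> ln (1/2)" using LIMSEQ_le_const2[OF L] by (simp add: eventually_sequentially)
  also have "ln (1/2::real) < 0" by simp
  finally show ?thesis .
qed

theorem generic:
  assumes fL: "finite L" and Lne: "L \<noteq> {}" and q: "q \<ge> 1" and r0: "0 < r0" "r0 \<le> 1"
    and vb: "\<forall>N\<ge>1. \<forall>x\<in>Xs q N. r0 * real (card (Edges K L N)) \<le> real (card {e \<in> Edges K L N. viol sat x e})"
    and sat: "\<forall>N\<ge>2. \<exists>e\<in>Edges K L N. \<exists>x\<in>Xs q N. \<not> viol sat x e"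
  shows "(\<forall>h. is_H_limit K q L sat h \<longrightarrow> H_threshold h) \<and> (\<forall>pf. is_p_limit K q L sat pf \<longrightarrow> p_threshold pf)"
proof -
  obtain k :: nat where k: "k \<ge> 1" "2 * real q * (1 - r0/2) ^ k \<le> 1/2" using exists_k[OF q r0] by blast
  have kp: "0 < real k" using k by simp
  show ?thesis
  proof (intro conjI allI impI)
    fix h assume lim: "is_H_limit K q L sat h"
    have "\<exists>cs. (\<forall>c. 0 < c \<and> c < cs \<longrightarrow> h c - c = 0) \<and> (\<forall>c. 0 < c \<and> cs < c \<longrightarrow> h c - c < 0)"
      by (rule threshold_gen[of "\<lambda>c. h c - c" "real k"])
        (use H_le[OF fL Lne q lim] H_mono[OF fL Lne q lim] H_lt[OF fL Lne q r0 vb k lim] kp in auto)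
    then show "H_threshold h" unfolding H_threshold_def by auto
  next
    fix pf assume lim: "is_p_limit K q L sat pf"
    have "\<exists>cs. (\<forall>c. 0 < c \<and> c < cs \<longrightarrow> pf c = 0) \<and> (\<forall>c. 0 < c \<and> cs < c \<longrightarrow> pf c < 0)"
      by (rule threshold_gen[of pf "real k"])
        (use pf_le0[OF fL lim] pf_mono[OF fL Lne q sat lim] pf_lt[OF fL Lne q r0 vb sat k lim] kp in auto)
    then show "p_threshold pf" unfolding p_threshold_def by auto
  qed
qed



lemma card_T: "card {v. set v \<subseteq> {0..<N} \<and> length v = K} = N ^ K"
  using card_lists_length_eq[of "{0..<N}" K] by simp

lemma finite_T: "finite {v. set v \<subseteq> {0..<(N::nat)} \<and> length v = K}"
  by (rule finite_lists_length_eq) simp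

lemma bv_eq: "bool_vectors K = {xs. set xs \<subseteq> {0,1} \<and> length xs = K}"
  unfolding bool_vectors_def by auto

lemma bv_finite: "finite (bool_vectors K)" unfolding bv_eq by (rule finite_lists_length_eq) simp
lemma bv_card: "card (bool_vectors K) = 2 ^ K" unfolding bv_eq by (subst card_lists_length_eq) (auto simp: numeral_2_eq_2)
lemma bv_ne: "bool_vectors K \<noteq> {}"
proof -
  have "replicate K 0 \<in> bool_vectors K" unfolding bool_vectors_def by auto
  then show ?thesis by auto
qed

lemma Xs_range: "x \<in> Xs q N \<Longrightarrow> j < N \<Longrightarrow> x j < q"
  unfolding Xs_def by (auto simp: PiE_iff)

lemma bool_vb:
  assumes viol_diag: "\<And>x v. viol sat x (v, map x v)"
  shows "\<forall>N\<ge>1. \<forall>x\<in>Xs 2 N. (1 / 2 ^ K) * real (card (Edges K (bool_vectors K) N))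
            \<le> real (card {e \<in> Edges K (bool_vectors K) N. viol sat x e})"
proof (intro allI impI ballI)
  fix N x assume N: "N \<ge> (1::nat)" and x: "x \<in> Xs 2 N"
  let ?T = "{v. set v \<subseteq> {0..<N} \<and> length v = K}"
  have cE: "card (Edges K (bool_vectors K) N) = N ^ K * 2 ^ K"
    unfolding Edges_def by (simp add: card_cartesian_product card_T bv_card)
  have sub: "(\<lambda>v. (v, map x v)) ` ?T \<subseteq> {e \<in> Edges K (bool_vectors K) N. viol sat x e}"
  proof
    fix e assume "e \<in> (\<lambda>v. (v, map x v)) ` ?T"
    then obtain v where v: "v \<in> ?T" "e = (v, map x v)" by auto
    have "set (map x v) \<subseteq> {0,1}"
    proof
      fix y assume "y \<in> set (map x v)"
      then obtain j where j: "j \<in> set v" "y = x j" by auto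
      then have "j < N" using v(1) by auto
      then have "x j < 2" using Xs_range[OF x] by simp
      then show "y \<in> {0,1}" using j by auto
    qed
    then have "map x v \<in> bool_vectors K"
      using v(1) unfolding bool_vectors_def by auto
    then show "e \<in> {e \<in> Edges K (bool_vectors K) N. viol sat x e}"
      using v viol_diag unfolding Edges_def by auto
  qed
  have inj: "inj_on (\<lambda>v. (v, map x v)) ?T" by (auto simp: inj_on_def)
  have "N ^ K = card ((\<lambda>v. (v, map x v)) ` ?T)" using card_image[OF inj] card_T by simp
  also have "\<dots> \<le> card {e \<in> Edges K (bool_vectors K) N. viol sat x e}"
    by (rule card_mono[OF _ sub]) (simp add: finite_Edges bv_finite)
  finally show "(1 / 2 ^ K) * real (card (Edges K (bool_vectors K) N))
            \<le> real (card {e \<in> Edges K (bool_vectors K) N. viol sat x e})"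
    unfolding cE by simp
qed

lemma zero_fun_Xs: "q \<ge> 1 \<Longrightarrow> restrict (\<lambda>_. 0) {0..<N} \<in> Xs q N"
  unfolding Xs_def by auto

lemma ksat_thm:
  assumes K: "K \<ge> 2"
  shows "(\<forall>h. is_H_limit K 2 (bool_vectors K) ksat_sat h \<longrightarrow> H_threshold h)
       \<and> (\<forall>pf. is_p_limit K 2 (bool_vectors K) ksat_sat pf \<longrightarrow> p_threshold pf)"
proof (rule generic[OF bv_finite bv_ne _ _ _ bool_vb])
  show "\<And>x v. viol ksat_sat x (v, map x v)" by (simp add: viol_def ksat_sat_def)
  show "\<forall>N\<ge>2. \<exists>e\<in>Edges K (bool_vectors K) N. \<exists>x\<in>Xs 2 N. \<not> viol ksat_sat x e"
  proof (intro allI impI)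
    fix N :: nat assume N: "N \<ge> 2"
    let ?e = "(replicate K 0, replicate K (1::nat))"
    let ?x = "restrict (\<lambda>_. 0::nat) {0..<N}"
    have "?e \<in> Edges K (bool_vectors K) N" using N unfolding Edges_def bool_vectors_def by auto
    moreover have "?x \<in> Xs 2 N" by (rule zero_fun_Xs) simp
    moreover have "\<not> viol ksat_sat ?x ?e"
      using N K unfolding viol_def ksat_sat_def by (auto simp: map_replicate_const)
    ultimately show "\<exists>e\<in>Edges K (bool_vectors K) N. \<exists>x\<in>Xs 2 N. \<not> viol ksat_sat x e" by blast
  qed
qed (auto simp: divide_le_eq)

lemma nae_thm:
  assumes K: "K \<ge> 2"
  shows "(\<forall>h. is_H_limit K 2 (bool_vectors K) naesat_sat h \<longrightarrow> H_threshold h)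
       \<and> (\<forall>pf. is_p_limit K 2 (bool_vectors K) naesat_sat pf \<longrightarrow> p_threshold pf)"
proof (rule generic[OF bv_finite bv_ne _ _ _ bool_vb])
  show "\<And>x v. viol naesat_sat x (v, map x v)" by (simp add: viol_def naesat_sat_def)
  show "\<forall>N\<ge>2. \<exists>e\<in>Edges K (bool_vectors K) N. \<exists>x\<in>Xs 2 N. \<not> viol naesat_sat x e"
  proof (intro allI impI)
    fix N :: nat assume N: "N \<ge> 2"
    let ?e = "(replicate K 0, 0 # replicate (K - 1) (1::nat))"
    let ?x = "restrict (\<lambda>_. 0::nat) {0..<N}"
    have "?e \<in> Edges K (bool_vectors K) N" using N K unfolding Edges_def bool_vectors_def by auto
    moreover have "?x \<in> Xs 2 N" by (rule zero_fun_Xs) simp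
    moreover have "\<not> viol naesat_sat ?x ?e"
    proof -
      obtain K' where K': "K = Suc K'" "K' \<ge> 1" using K by (intro that[of "K - 1"]) auto
      have m: "map ?x (replicate K 0) = 0 # replicate K' 0"
        using N K'(1) by (simp add: map_replicate)
      have "replicate K' (0::nat) \<noteq> replicate K' 1" using K'(2) by (cases K') auto
      then show ?thesis unfolding viol_def naesat_sat_def m using K'(1) N by simp
    qed
    ultimately show "\<exists>e\<in>Edges K (bool_vectors K) N. \<exists>x\<in>Xs 2 N. \<not> viol naesat_sat x e" by blast
  qed
qed (auto simp: divide_le_eq)



lemma pigeon:
  assumes q: "q \<ge> 1" and x: "x \<in> Xs q N"
  shows "\<exists>i<q. real (card {j \<in> {0..<N}. x j = i}) \<ge> real N / real q"
proof (rule ccontr)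
  assume A: "\<not> ?thesis"
  have u: "{0..<N} = (\<Union>i\<in>{0..<q}. {j \<in> {0..<N}. x j = i})" using Xs_range[OF x] by auto
  have "N = card (\<Union>i\<in>{0..<q}. {j \<in> {0..<N}. x j = i})" using u by (metis card_atLeastLessThan diff_zero)
  also have "\<dots> = (\<Sum>i\<in>{0..<q}. card {j \<in> {0..<N}. x j = i})"
    by (rule card_UN_disjoint) auto
  finally have "real N = (\<Sum>i\<in>{0..<q}. real (card {j \<in> {0..<N}. x j = i}))" by (metis of_nat_sum)
  also have "\<dots> < (\<Sum>i\<in>{0..<q}. real N / real q)"
    by (rule sum_strict_mono) (use A q in auto)
  also have "\<dots> = real N" using q by simp
  finally show False by simp
qed

lemma col_vb:
  assumes q: "q \<ge> 1"
  shows "\<forall>N\<ge>1. \<forall>x\<in>Xs q N. (1 / real q ^ 2) * real (card (Edges 2 coloring_labels N))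
            \<le> real (card {e \<in> Edges 2 coloring_labels N. viol coloring_sat x e})"
proof (intro allI impI ballI)
  fix N x assume N: "N \<ge> (1::nat)" and x: "x \<in> Xs q N"
  obtain i where i: "i < q" "real (card {j \<in> {0..<N}. x j = i}) \<ge> real N / real q"
    using pigeon[OF q x] by blast
  let ?C = "{j \<in> {0..<N}. x j = i}"
  have cE: "card (Edges 2 coloring_labels N) = N ^ 2"
    unfolding Edges_def coloring_labels_def by (simp add: card_cartesian_product card_T)
  let ?f = "\<lambda>(a, b). ([a, b], [] :: nat list)"
  have sub: "?f ` (?C \<times> ?C) \<subseteq> {e \<in> Edges 2 coloring_labels N. viol coloring_sat x e}"
    unfolding Edges_def coloring_labels_def viol_def coloring_sat_def by auto
  have inj: "inj_on ?f (?C \<times> ?C)" by (auto simp: inj_on_def)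
  have "card (?C \<times> ?C) \<le> card {e \<in> Edges 2 coloring_labels N. viol coloring_sat x e}"
  proof -
    have fin: "finite {e \<in> Edges 2 coloring_labels N. viol coloring_sat x e}"
      using finite_Edges[of coloring_labels] by (simp add: coloring_labels_def)
    show ?thesis using card_mono[OF fin sub] card_image[OF inj] by simp
  qed
  then have "card ?C ^ 2 \<le> card {e \<in> Edges 2 coloring_labels N. viol coloring_sat x e}"
    by (simp add: card_cartesian_product power2_eq_square)
  then have b: "real (card ?C) ^ 2 \<le> real (card {e \<in> Edges 2 coloring_labels N. viol coloring_sat x e})"
    by (simp only: of_nat_power[symmetric] of_nat_le_iff)
  have a: "(real N / real q) ^ 2 \<le> real (card ?C) ^ 2"
    by (rule power_mono[OF i(2)]) simp
  show "(1 / real q ^ 2) * real (card (Edges 2 coloring_labels N))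
            \<le> real (card {e \<in> Edges 2 coloring_labels N. viol coloring_sat x e})"
  proof -
    have "(1 / real q ^ 2) * real (N ^ 2) = (real N / real q) ^ 2" by (simp add: power_divide)
    then show ?thesis unfolding cE using a b by linarith
  qed
qed

lemma col_thm:
  assumes q: "q \<ge> 2"
  shows "(\<forall>h. is_H_limit 2 q coloring_labels coloring_sat h \<longrightarrow> H_threshold h)
       \<and> (\<forall>pf. is_p_limit 2 q coloring_labels coloring_sat pf \<longrightarrow> p_threshold pf)"
proof -
  have q1: "1 \<le> q" using q by simp
  show ?thesis
proof (rule generic[OF _ _ q1 _ _ col_vb[OF q1]])
  show "\<forall>N\<ge>2. \<exists>e\<in>Edges 2 coloring_labels N. \<exists>x\<in>Xs q N. \<not> viol coloring_sat x e"
  proof (intro allI impI)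
    fix N :: nat assume N: "N \<ge> 2"
    let ?e = "([0, 1], [] :: nat list)"
    let ?x = "restrict (\<lambda>j. if j = 0 then 0 else 1::nat) {0..<N}"
    have "?e \<in> Edges 2 coloring_labels N" using N unfolding Edges_def coloring_labels_def by auto
    moreover have "?x \<in> Xs q N" using q unfolding Xs_def by auto
    moreover have "\<not> viol coloring_sat ?x ?e"
      using N unfolding viol_def coloring_sat_def by auto
    ultimately show "\<exists>e\<in>Edges 2 coloring_labels N. \<exists>x\<in>Xs q N. \<not> viol coloring_sat x e" by blast
  qed
next
  show "finite coloring_labels" "coloring_labels \<noteq> {}" by (auto simp: coloring_labels_def)
  show "0 < 1 / real q ^ 2" using q by simp
  have "1 \<le> real q ^ 2" using q by simp
  then show "1 / real q ^ 2 \<le> 1" by (simp add: divide_le_eq)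
qed
qed

theorem corollary1:
  fixes q K :: nat
  assumes "q \<ge> 2" and "K \<ge> 2"
  shows "(\<forall>h. is_H_limit 2 q coloring_labels coloring_sat h \<longrightarrow> H_threshold h)
       \<and> (\<forall>pf. is_p_limit 2 q coloring_labels coloring_sat pf \<longrightarrow> p_threshold pf)
       \<and> (\<forall>h. is_H_limit K 2 (bool_vectors K) ksat_sat h \<longrightarrow> H_threshold h)
       \<and> (\<forall>pf. is_p_limit K 2 (bool_vectors K) ksat_sat pf \<longrightarrow> p_threshold pf)
       \<and> (\<forall>h. is_H_limit K 2 (bool_vectors K) naesat_sat h \<longrightarrow> H_threshold h)
       \<and> (\<forall>pf. is_p_limit K 2 (bool_vectors K) naesat_sat pf \<longrightarrow> p_threshold pf)"
  using col_thm[OF assms(1)] ksat_thm[OF assms(2)] nae_thm[OF assms(2)] by blast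

end
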